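(* Let $\mu\in(0,1)$, $\rho\in[0,1]$, $\nu=\mu^2+\rho\mu(1-\mu)$ and $s=\mu(1-\mu)(1-\rho)$. Let $L_1(\mu,\nu)=\inf_{\pi\in\mathcal M(\mu,\nu)}\int P_1\,d\pi$ and $U_1(\mu,\nu)=\sup_{\pi\in\mathcal M(\mu,\nu)}\int P_1\,d\pi$ with $P_1(q)=3q^2-2q^3$. Then \[ L_1(\mu,\nu)=\nu+2\frac{(\mu-\nu)^2}{1-\mu}=\mu+s\{2\mu(1-\rho)-1\}, \] \[ U_1(\mu,\nu)=3\nu-2\frac{\nu^2}{\mu}=\mu+s\{2\mu+2\rho(1-\mu)-1\}. \] Moreover $U_1(\mu,\nu)-L_1(\mu,\nu)=2\mu(1-\mu)\rho(1-\rho)\le1/8$, and if $\mu>1/2$, then $\int P_1\,d\pi>\mu$ holds for every $\pi\in\mathcal M(\mu,\nu)$ if and only if $\rho<1-1/(2\mu)$.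
   Context: $\mathcal M(\mu,\nu)$ denotes the set of Borel probability measures $\pi$ on $[0,1]$ with $\int q\,d\pi(q)=\mu$ and $\int q^2\,d\pi(q)=\nu$. $P_1(q)=\mathbb{P}\{\mathrm{Bin}(3,q)\ge2\}$ is the three-vote majority success probability. *)

theory Defs
  imports "HOL-Probability.Probability"
begin

text \<open>Three-vote majority success probability P_1(q) = P(Bin(3,q) >= 2) = 3q^2 - 2q^3.\<close>
definition P1 :: "real \<Rightarrow> real" where
  "P1 q = 3 * q^2 - 2 * q^3"

definition moment_class :: "real \<Rightarrow> real \<Rightarrow> real measure set" where
  "moment_class \<mu> \<nu> = {\<pi>. prob_space \<pi> \<and> sets \<pi> = sets borel \<and> measure \<pi> {0..1} = 1 \<and>
      (\<integral>q. q \<partial>\<pi>) = \<mu> \<and> (\<integral>q. q^2 \<partial>\<pi>) = \<nu>}"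

definition L1 :: "real \<Rightarrow> real \<Rightarrow> real" where
  "L1 \<mu> \<nu> = (INF \<pi>\<in>moment_class \<mu> \<nu>. \<integral>q. P1 q \<partial>\<pi>)"

definition U1 :: "real \<Rightarrow> real \<Rightarrow> real" where
  "U1 \<mu> \<nu> = (SUP \<pi>\<in>moment_class \<mu> \<nu>. \<integral>q. P1 q \<partial>\<pi>)"

end

theory Submission
  imports Defs
begin

definition tp :: "real \<Rightarrow> real \<Rightarrow> real \<Rightarrow> real measure" where
  "tp w a c = distr (measure_pmf (bernoulli_pmf w)) borel (\<lambda>b. if b then a else c)"

lemma tp_int:
  assumes "0 \<le> w" "w \<le> 1" "f \<in> borel_measurable borel"
  shows "(\<integral>q. f q \<partial>tp w a c) = w * f a + (1 - w) * (f c :: real)"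
proof -
  have "(\<integral>q. f q \<partial>tp w a c) = (\<integral>b. f (if b then a else c) \<partial>measure_pmf (bernoulli_pmf w))"
    unfolding tp_def by (rule integral_distr) (use assms in auto)
  also have "\<dots> = w * f a + (1 - w) * f c" using assms by simp
  finally show ?thesis .
qed

lemma tp_class:
  assumes "0 \<le> w" "w \<le> 1" "0 \<le> a" "a \<le> 1" "0 \<le> c" "c \<le> 1"
    "w * a + (1 - w) * c = \<mu>" "w * a^2 + (1 - w) * c^2 = \<nu>"
  shows "tp w a c \<in> moment_class \<mu> \<nu>"
proof -
  have ps: "prob_space (tp w a c)" unfolding tp_def
    by (rule prob_space.prob_space_distr) (auto simp: measure_pmf.prob_space_axioms)
  have "measure (tp w a c) {0..1} = measure (measure_pmf (bernoulli_pmf w)) ((\<lambda>b. if b then a else c) -` {0..1} \<inter> UNIV)"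
    unfolding tp_def by (subst measure_distr) auto
  also have "(\<lambda>b. if b then a else c) -` {0..1} \<inter> UNIV = UNIV" using assms by auto
  also have "measure (measure_pmf (bernoulli_pmf w)) UNIV = 1" by simp
  finally have m: "measure (tp w a c) {0..1} = 1" .
  show ?thesis unfolding moment_class_def using ps m assms
    by (simp add: tp_int[of w "\<lambda>q. q"] tp_int[of w "\<lambda>q. q^2"]) (simp add: tp_def)
qed

lemma class_AE:
  assumes "\<pi> \<in> moment_class \<mu> \<nu>"
  shows "AE q in \<pi>. q \<in> {0..1}"
proof -
  interpret prob_space \<pi> using assms by (simp add: moment_class_def)
  show ?thesis using assms by (intro AE_prob_1) (auto simp: moment_class_def)
qed

lemma class_integrable:
  assumes "\<pi> \<in> moment_class \<mu> \<nu>" "continuous_on UNIV f"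
  shows "integrable \<pi> (f :: real \<Rightarrow> real)"
proof -
  interpret prob_space \<pi> using assms by (simp add: moment_class_def)
  have sb: "sets \<pi> = sets borel" using assms by (simp add: moment_class_def)
  obtain B where B: "\<forall>x\<in>{0..1::real}. norm (f x) \<le> B"
    using compact_imp_bounded[OF compact_continuous_image[OF continuous_on_subset[OF assms(2)], of "{0..1}"]]
    by (auto simp: bounded_iff)
  show ?thesis
  proof (rule integrable_const_bound[where B=B])
    show "AE x in \<pi>. norm (f x) \<le> B" by (rule AE_mp[OF class_AE[OF assms(1)]]) (use B in \<open>auto intro!: AE_I2\<close>)
    have "f \<in> borel_measurable borel" using assms(2) by (rule borel_measurable_continuous_onI)
    then show "f \<in> borel_measurable \<pi>" by (subst measurable_cong_sets[OF sb refl])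
  qed
qed

lemma class_quad:
  assumes "\<pi> \<in> moment_class \<mu> \<nu>"
  shows "(\<integral>q. a + b * q + c * q^2 \<partial>\<pi>) = a + b * \<mu> + c * \<nu>"
proof -
  interpret prob_space \<pi> using assms by (simp add: moment_class_def)
  have i1: "integrable \<pi> (\<lambda>q. q)" by (rule class_integrable[OF assms]) (intro continuous_intros)
  have i2: "integrable \<pi> (\<lambda>q. q^2)" by (rule class_integrable[OF assms]) (intro continuous_intros)
  have "(\<integral>q. a + b * q + c * q^2 \<partial>\<pi>) = (\<integral>q. a + b * q \<partial>\<pi>) + (\<integral>q. c * q^2 \<partial>\<pi>)"
    using i1 i2 by (intro Bochner_Integration.integral_add) auto
  also have "(\<integral>q. a + b * q \<partial>\<pi>) = a + b * \<mu>"
    using i1 assms prob_space by (subst Bochner_Integration.integral_add) (auto simp: moment_class_def)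
  also have "(\<integral>q. c * q^2 \<partial>\<pi>) = c * \<nu>" using assms by (simp add: moment_class_def)
  finally show ?thesis .
qed

lemma class_mono:
  assumes "\<pi> \<in> moment_class \<mu> \<nu>" "continuous_on UNIV f" "continuous_on UNIV g"
    "\<And>q. 0 \<le> q \<Longrightarrow> q \<le> 1 \<Longrightarrow> f q \<le> (g q :: real)"
  shows "(\<integral>q. f q \<partial>\<pi>) \<le> (\<integral>q. g q \<partial>\<pi>)"
  using class_integrable[OF assms(1,2)] class_integrable[OF assms(1,3)]
  by (rule integral_mono_AE) (rule AE_mp[OF class_AE[OF assms(1)]], use assms(4) in \<open>auto intro!: AE_I2\<close>)


lemma P1_cont: "continuous_on UNIV P1"
  unfolding P1_def by (intro continuous_intros)

theorem theorem2:
  fixes \<mu> \<rho> \<nu> s :: real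
  assumes "0 < \<mu>" "\<mu> < 1" "0 \<le> \<rho>" "\<rho> \<le> 1"
    and "\<nu> = \<mu>^2 + \<rho> * \<mu> * (1 - \<mu>)"
    and "s = \<mu> * (1 - \<mu>) * (1 - \<rho>)"
  shows "L1 \<mu> \<nu> = \<nu> + 2 * (\<mu> - \<nu>)^2 / (1 - \<mu>)
    \<and> \<nu> + 2 * (\<mu> - \<nu>)^2 / (1 - \<mu>) = \<mu> + s * (2 * \<mu> * (1 - \<rho>) - 1)
    \<and> U1 \<mu> \<nu> = 3 * \<nu> - 2 * \<nu>^2 / \<mu>
    \<and> 3 * \<nu> - 2 * \<nu>^2 / \<mu> = \<mu> + s * (2 * \<mu> + 2 * \<rho> * (1 - \<mu>) - 1)
    \<and> U1 \<mu> \<nu> - L1 \<mu> \<nu> = 2 * \<mu> * (1 - \<mu>) * \<rho> * (1 - \<rho>)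
    \<and> U1 \<mu> \<nu> - L1 \<mu> \<nu> \<le> 1/8
    \<and> (\<mu> > 1/2 \<longrightarrow>
           ((\<forall>\<pi>\<in>moment_class \<mu> \<nu>. (\<integral>q. P1 q \<partial>\<pi>) > \<mu>) \<longleftrightarrow> \<rho> < 1 - 1 / (2 * \<mu>)))"
proof -
  define L where "L = \<nu> + 2 * (\<mu> - \<nu>)^2 / (1 - \<mu>)"
  define U where "U = 3 * \<nu> - 2 * \<nu>^2 / \<mu>"
  define t where "t = \<mu> * (1 - \<rho>)"
  define u where "u = \<mu> + \<rho> * (1 - \<mu>)"
  have t0: "0 \<le> t" and t1: "t \<le> \<mu>" unfolding t_def using assms
    by (auto intro: mult_nonneg_nonneg simp: mult_left_le)
  have u0: "\<mu> \<le> u" unfolding u_def using assms by simp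
  have "\<rho> * (1 - \<mu>) \<le> 1 * (1 - \<mu>)" using assms by (intro mult_right_mono) auto
  then have u1: "u \<le> 1" unfolding u_def by simp
  have Lt: "L = \<nu> + 2 * t^2 * (1 - \<mu>)" unfolding L_def t_def assms(5) using assms(2)
    by (simp add: field_simps power2_eq_square)
  have Lq: "L = (- 2 * t^2) + (4*t + 2*t^2) * \<mu> + (1 - 4*t) * \<nu>"
    unfolding Lt t_def assms(5) by (simp add: algebra_simps power2_eq_square)
  have Uu: "U = 3 * \<nu> - 2 * u * \<nu>" unfolding U_def u_def assms(5) using assms(1)
    by (simp add: field_simps power2_eq_square)
  have Uq: "U = 0 + (2 * u^2) * \<mu> + (3 - 4*u) * \<nu>"
    unfolding Uu u_def assms(5) by (simp add: algebra_simps power2_eq_square)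
  have lowb: "L \<le> (\<integral>q. P1 q \<partial>\<pi>)" if "\<pi> \<in> moment_class \<mu> \<nu>" for \<pi>
  proof -
    have "(\<integral>q. (- 2 * t^2) + (4*t + 2*t^2) * q + (1 - 4*t) * q^2 \<partial>\<pi>) \<le> (\<integral>q. P1 q \<partial>\<pi>)"
    proof (rule class_mono[OF that _ P1_cont])
      show "continuous_on UNIV (\<lambda>q. (- 2 * t^2) + (4*t + 2*t^2) * q + (1 - 4*t) * q^2)"
        by (intro continuous_intros)
      fix q :: real assume q: "0 \<le> q" "q \<le> 1"
      have "P1 q - ((- 2 * t^2) + (4*t + 2*t^2) * q + (1 - 4*t) * q^2) = 2 * (q - t)^2 * (1 - q)"
        unfolding P1_def by (simp add: algebra_simps power2_eq_square power3_eq_cube)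
      moreover have "0 \<le> 2 * (q - t)^2 * (1 - q)" using q by simp
      ultimately show "(- 2 * t^2) + (4*t + 2*t^2) * q + (1 - 4*t) * q^2 \<le> P1 q" by linarith
    qed
    then show ?thesis by (simp only: class_quad[OF that] Lq)
  qed
  have uppb: "(\<integral>q. P1 q \<partial>\<pi>) \<le> U" if "\<pi> \<in> moment_class \<mu> \<nu>" for \<pi>
  proof -
    have "(\<integral>q. P1 q \<partial>\<pi>) \<le> (\<integral>q. 0 + (2 * u^2) * q + (3 - 4*u) * q^2 \<partial>\<pi>)"
    proof (rule class_mono[OF that P1_cont])
      show "continuous_on UNIV (\<lambda>q. 0 + (2 * u^2) * q + (3 - 4*u) * q^2)"
        by (intro continuous_intros)
      fix q :: real assume q: "0 \<le> q" "q \<le> 1"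
      have "(0 + (2 * u^2) * q + (3 - 4*u) * q^2) - P1 q = 2 * (q - u)^2 * q"
        unfolding P1_def by (simp add: algebra_simps power2_eq_square power3_eq_cube)
      moreover have "0 \<le> 2 * (q - u)^2 * q" using q by simp
      ultimately show "P1 q \<le> 0 + (2 * u^2) * q + (3 - 4*u) * q^2" by linarith
    qed
    then show ?thesis by (simp only: class_quad[OF that] Uq)
  qed
  define wL where "wL = (\<mu> - t) / (1 - t)"
  have t1': "t < 1" using t1 assms by simp
  have wL0: "0 \<le> wL" "wL \<le> 1" unfolding wL_def using t1 t1' assms by auto
  have ne: "1 - t \<noteq> 0" using t1' by simp
  have wL1: "wL * 1 + (1 - wL) * t = \<mu>" unfolding wL_def using ne
    by (simp add: divide_simps) (simp add: algebra_simps)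
  have nu_t: "\<nu> = \<mu> - t * (1 - \<mu>)" unfolding assms(5) t_def by (simp add: algebra_simps power2_eq_square)
  have nu_u: "\<nu> = u * \<mu>" unfolding assms(5) u_def by (simp add: algebra_simps power2_eq_square)
  have wL2: "wL * 1^2 + (1 - wL) * t^2 = \<nu>" unfolding wL_def using ne
    by (simp add: nu_t divide_simps) (simp add: algebra_simps power2_eq_square)
  have wL3: "wL * P1 1 + (1 - wL) * P1 t = L" unfolding wL_def Lt using t1'
    by (simp add: nu_t divide_simps P1_def) (simp add: algebra_simps power2_eq_square power3_eq_cube)
  have mL: "tp wL 1 t \<in> moment_class \<mu> \<nu>"
    by (rule tp_class) (use wL0 t0 t1' wL1 wL2 in auto)
  have iL: "(\<integral>q. P1 q \<partial>tp wL 1 t) = L"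
    using tp_int[OF wL0, of P1] wL3 borel_measurable_continuous_onI[OF P1_cont] by simp
  define wU where "wU = \<mu> / u"
  have u0': "0 < u" using u0 assms by simp
  have wU0: "0 \<le> wU" "wU \<le> 1" unfolding wU_def using u0 u0' assms by auto
  have wU1: "wU * u + (1 - wU) * 0 = \<mu>" unfolding wU_def using u0' by simp
  have wU2: "wU * u^2 + (1 - wU) * 0^2 = \<nu>" unfolding wU_def using u0'
    by (simp add: nu_u divide_simps) (simp add: algebra_simps power2_eq_square)
  have wU3: "wU * P1 u + (1 - wU) * P1 0 = U" unfolding wU_def Uu using u0'
    by (simp add: nu_u divide_simps P1_def) (simp add: algebra_simps power2_eq_square power3_eq_cube)
  have mU: "tp wU u 0 \<in> moment_class \<mu> \<nu>"
    by (rule tp_class) (use wU0 u0 u1 u0' wU1 wU2 in auto)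
  have iU: "(\<integral>q. P1 q \<partial>tp wU u 0) = U"
    using tp_int[OF wU0, of P1] wU3 borel_measurable_continuous_onI[OF P1_cont] by simp
  have L1e: "L1 \<mu> \<nu> = L" unfolding L1_def
  proof (rule antisym)
    show "(INF \<pi>\<in>moment_class \<mu> \<nu>. \<integral>q. P1 q \<partial>\<pi>) \<le> L"
      using iL mL lowb by (metis (no_types, lifting) bdd_belowI2 cINF_lower)
    show "L \<le> (INF \<pi>\<in>moment_class \<mu> \<nu>. \<integral>q. P1 q \<partial>\<pi>)"
      using mL lowb by (intro cINF_greatest) auto
  qed
  have U1e: "U1 \<mu> \<nu> = U" unfolding U1_def
  proof (rule antisym)
    show "U \<le> (SUP \<pi>\<in>moment_class \<mu> \<nu>. \<integral>q. P1 q \<partial>\<pi>)"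
      using iU mU uppb by (metis (no_types, lifting) bdd_aboveI2 cSUP_upper)
    show "(SUP \<pi>\<in>moment_class \<mu> \<nu>. \<integral>q. P1 q \<partial>\<pi>) \<le> U"
      using mU uppb by (intro cSUP_least) auto
  qed
  have Ls: "L = \<mu> + s * (2 * \<mu> * (1 - \<rho>) - 1)"
    unfolding Lt t_def assms(5,6) by (simp add: algebra_simps power2_eq_square)
  have Us: "U = \<mu> + s * (2 * \<mu> + 2 * \<rho> * (1 - \<mu>) - 1)"
    unfolding Uu u_def assms(5,6) by (simp add: algebra_simps power2_eq_square)
  have diff: "U - L = 2 * \<mu> * (1 - \<mu>) * \<rho> * (1 - \<rho>)"
    unfolding Ls Us assms(6) by (simp add: algebra_simps)
  have b1: "\<mu> * (1 - \<mu>) \<le> 1/4"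
  proof -
    have "0 \<le> (\<mu> - 1/2)^2" by simp
    then show ?thesis by (simp add: algebra_simps power2_eq_square)
  qed
  have b2: "\<rho> * (1 - \<rho>) \<le> 1/4"
  proof -
    have "0 \<le> (\<rho> - 1/2)^2" by simp
    then show ?thesis by (simp add: algebra_simps power2_eq_square)
  qed
  have "(\<mu> * (1 - \<mu>)) * (\<rho> * (1 - \<rho>)) \<le> (1/4) * (1/4)"
    by (rule mult_mono) (use b1 b2 assms in auto)
  then have bd: "U - L \<le> 1/8" unfolding diff by (simp add: algebra_simps)
  have last: "(\<forall>\<pi>\<in>moment_class \<mu> \<nu>. (\<integral>q. P1 q \<partial>\<pi>) > \<mu>) \<longleftrightarrow> \<rho> < 1 - 1 / (2 * \<mu>)"
    if h: "\<mu> > 1/2"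
  proof -
    have "(\<forall>\<pi>\<in>moment_class \<mu> \<nu>. (\<integral>q. P1 q \<partial>\<pi>) > \<mu>) \<longleftrightarrow> L > \<mu>"
      using mL iL lowb by fastforce
    also have "\<dots> \<longleftrightarrow> \<rho> < 1 - 1 / (2 * \<mu>)"
    proof (cases "\<rho> = 1")
      case True
      then show ?thesis using Ls assms by simp
    next
      case False
      then have sp: "s > 0" using assms by simp
      have "L > \<mu> \<longleftrightarrow> 2 * \<mu> * (1 - \<rho>) - 1 > 0" using Ls sp
        by (simp add: zero_less_mult_iff)
      also have "\<dots> \<longleftrightarrow> \<rho> < 1 - 1 / (2 * \<mu>)" using assms
        by (simp add: field_simps)
      finally show ?thesis .
    qed
    finally show ?thesis .
  qed
  show ?thesis using L1e U1e Ls Us diff bd last unfolding L_def U_def by simp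
qed

end
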